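(* There exists a $(5,30)$ strategy for the GKS game.
   Context: The GKS game with parameter $n$ (a positive integer). A strategy pair $(S,T)$ consists of a function $S$ assigning a bit in $\{0,1\}$ to every sequence $\pi_1\pi_2\ldots\pi_i$ of distinct elements of $[n]=\{1,\dots,n\}$ with $1\le i\le n-1$, and a function $T:\{0,1\}^n\to 2^{[n]}$. For a permutation $\pi=\pi_1\ldots\pi_n$ of $[n]$ and a bit $b$, the final array $A_{\rm final}\in\{0,1\}^n$ is defined by $A_{\rm final}[\pi_i]=S(\pi_1\ldots\pi_i)$ for $1\le i\le n-1$ and $A_{\rm final}[\pi_n]=b$. The pair $(S,T)$ is a $(k,n)$ strategy if for every permutation $\pi$ of $[n]$ and every bit $b$ we have $\pi_n\in T(A_{\rm final})$, and moreover $|T(\sigma)|\le k$ for every $\sigma\in\{0,1\}^n$. *)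

theory Defs
  imports Main
begin

text \<open>Bits are bool (False = 0, True = 1). An array in {0,1}^n is a bool list of length n,
  whose entry at position j-1 is A[j].\<close>

definition final_array ::
    "nat \<Rightarrow> (nat list \<Rightarrow> bool) \<Rightarrow> nat list \<Rightarrow> bool \<Rightarrow> bool list" where
  "final_array n S \<pi> b =
     map (\<lambda>j. if j = last \<pi> then b
               else S (take (Suc (the_elem {i. i < n \<and> \<pi> ! i = j})) \<pi>)) [1..<Suc n]"

definition is_strategy ::
    "nat \<Rightarrow> nat \<Rightarrow> (nat list \<Rightarrow> bool) \<Rightarrow> (bool list \<Rightarrow> nat set) \<Rightarrow> bool" where
  "is_strategy k n S T \<longleftrightarrow>
     (\<forall>\<sigma>. length \<sigma> = n \<longrightarrow> T \<sigma> \<subseteq> {1..n} \<and> card (T \<sigma>) \<le> k) \<and>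
     (\<forall>\<pi> b. distinct \<pi> \<and> set \<pi> = {1..n} \<longrightarrow> last \<pi> \<in> T (final_array n S \<pi> b))"

end

theory Submission
  imports Defs
begin

definition cw :: "bool list list" where
  "cw = [[False,False,False,False,False,False],
         [True,False,False,False,True,True],
         [False,True,False,True,False,True],
         [False,False,True,True,True,False],
         [True,True,False,True,True,False],
         [True,False,True,True,False,True]]"

definition B :: "nat \<Rightarrow> nat \<Rightarrow> bool" where "B f i = cw ! f ! i"

lemma all6: "(\<forall>i<(6::nat). P i) \<longleftrightarrow> P 0 \<and> P 1 \<and> P 2 \<and> P 3 \<and> P 4 \<and> P 5"
  by (simp add: numeral_eq_Suc All_less_Suc conj_ac)

lemma upt6: "[0..<6] = [0,1,2,3,4,5::nat]" by (simp add: upt_rec)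

lemma difflen: "\<forall>f<6. \<forall>g<6. f \<noteq> g \<longrightarrow> 3 \<le> length (filter (\<lambda>i. B f i \<noteq> B g i) [0..<6])"
  unfolding all6 upt6 by (simp add: B_def cw_def)

lemma codeD:
  assumes "f < 6" "g < 6" "f \<noteq> g" "\<forall>i<6. B f i \<noteq> B g i \<longrightarrow> i = j \<or> i = j'"
  shows False
proof -
  let ?D = "filter (\<lambda>i. B f i \<noteq> B g i) [0..<6]"
  have "set ?D \<subseteq> {j, j'}" using assms(4) by auto
  hence "card (set ?D) \<le> card {j, j'}" by (intro card_mono) auto
  also have "\<dots> \<le> 2" by (simp add: card_insert_le_m1)
  finally have "length ?D \<le> 2" using distinct_card[of ?D] by simp
  with difflen assms(1-3) show False by fastforce
qed

lemma K1: "f < 6 \<Longrightarrow> g < 6 \<Longrightarrow> \<forall>i<6. B f i = B g i \<Longrightarrow> f = g"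
  using codeD[of f g 0 0] by blast

lemma K2: "f < 6 \<Longrightarrow> g < 6 \<Longrightarrow> j < 6 \<Longrightarrow> \<forall>i<6. B g i = (B f i \<noteq> (i = j)) \<Longrightarrow> False"
proof (cases "f = g")
  case True
  assume "j < 6" "\<forall>i<6. B g i = (B f i \<noteq> (i = j))"
  then show False using True by auto
next
  case False
  assume "f < 6" "g < 6" "\<forall>i<6. B g i = (B f i \<noteq> (i = j))"
  then show False using codeD[of f g j j] False by auto
qed

lemma K3: "f < 6 \<Longrightarrow> g < 6 \<Longrightarrow> j < 6 \<Longrightarrow> j' < 6 \<Longrightarrow>
   \<forall>i<6. (B f i \<noteq> (i = j)) = (B g i \<noteq> (i = j')) \<Longrightarrow> j = j'"
proof (cases "f = g")
  case True
  assume "j < 6" "\<forall>i<6. (B f i \<noteq> (i = j)) = (B g i \<noteq> (i = j'))"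
  then show "j = j'" using True by auto
next
  case False
  assume "f < 6" "g < 6" "\<forall>i<6. (B f i \<noteq> (i = j)) = (B g i \<noteq> (i = j'))"
  then show "j = j'" using codeD[of f g j j'] False by auto
qed

definition cls :: "nat \<Rightarrow> nat" where "cls x = (x - 1) div 6"
definition pz :: "nat \<Rightarrow> nat" where "pz x = (x - 1) mod 6"

definition Sg :: "nat list \<Rightarrow> bool" where
  "Sg l = (B (pz (hd (filter (\<lambda>y. cls y = cls (last l)) l))) (pz (last l))
           \<noteq> (length (filter (\<lambda>y. cls y = cls (last l)) l) = 6))"

definition Tg :: "bool list \<Rightarrow> nat set" where
  "Tg \<sigma> = (if \<exists>c<5. \<exists>f<6. \<forall>i<6. \<sigma>!(6*c+i) = B f i then
     (let cf = SOME cf. fst cf < 5 \<and> snd cf < 6 \<and> (\<forall>i<6. \<sigma>!(6*fst cf+i) = B (snd cf) i)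
      in (\<lambda>i. 6*fst cf+i+1) ` {i. i<6 \<and> i \<noteq> snd cf})
   else {x. \<exists>c<5. \<exists>j<6. x = 6*c+j+1 \<and> (\<exists>f<6. \<forall>i<6. \<sigma>!(6*c+i) = (B f i \<noteq> (i=j)))})"

lemma cls_pz: "1 \<le> x \<Longrightarrow> x = 6 * cls x + pz x + 1"
  unfolding cls_def pz_def by simp

lemma cls_pz2 [simp]: "cls (6*c+i+1) = c + i div 6" "pz (6*c+i+1) = i mod 6"
  "cls (Suc (6*c+i)) = c + i div 6" "pz (Suc (6*c+i)) = i mod 6"
  unfolding cls_def pz_def by simp_all

lemma fa_nth: "x \<in> {1..n} \<Longrightarrow> final_array n S \<pi> b ! (x - 1) =
   (if x = last \<pi> then b else S (take (Suc (the_elem {i. i < n \<and> \<pi> ! i = x})) \<pi>))"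
proof -
  assume x: "x \<in> {1..n}"
  have "x - 1 < length [1..<Suc n]" using x by auto
  moreover have "[1..<Suc n] ! (x - 1) = x" using x by (subst nth_upt) auto
  ultimately show ?thesis unfolding final_array_def by (simp only: nth_map)
qed

lemma Tg_card: "Tg \<sigma> \<subseteq> {1..30} \<and> card (Tg \<sigma>) \<le> 5"
proof (cases "\<exists>c<5. \<exists>f<6. \<forall>i<6. \<sigma>!(6*c+i) = B f i")
  case True
  then obtain c f where cf: "c < 5" "f < 6" "\<forall>i<6. \<sigma>!(6*c+i) = B f i" by blast
  define cf where "cf = (SOME cf. fst cf < 5 \<and> snd cf < 6 \<and> (\<forall>i<6. \<sigma>!(6*fst cf+i) = B (snd cf) i))"
  have "fst cf < 5 \<and> snd cf < 6 \<and> (\<forall>i<6. \<sigma>!(6*fst cf+i) = B (snd cf) i)"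
    unfolding cf_def by (rule someI[of _ "(c,f)"]) (use cf in auto)
  hence c5: "fst cf < 5" "snd cf < 6" by auto
  have T: "Tg \<sigma> = (\<lambda>i. 6*fst cf+i+1) ` {i. i<6 \<and> i \<noteq> snd cf}"
    unfolding Tg_def cf_def using True by (simp add: Let_def)
  have "{i. i<6 \<and> i \<noteq> snd cf} = {..<6} - {snd cf}" by auto
  hence cd: "card {i. i<6 \<and> i \<noteq> snd cf} = 5" using c5 by simp
  have "card (Tg \<sigma>) \<le> 5" unfolding T using card_image_le[of "{i. i<6 \<and> i \<noteq> snd cf}" "\<lambda>i. 6*fst cf+i+1"] cd
    by simp
  moreover have "Tg \<sigma> \<subseteq> {1..30}" unfolding T using c5 by auto
  ultimately show ?thesis by simp
next
  case False
  define P where "P c j = (\<exists>f<6. \<forall>i<6. \<sigma>!(6*c+i) = (B f i \<noteq> (i=j)))" for c j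
  have T: "Tg \<sigma> = {x. \<exists>c<5. \<exists>j<6. x = 6*c+j+1 \<and> P c j}"
    unfolding Tg_def P_def by (simp only: if_not_P[OF False])
  define J where "J c = (SOME j. j < 6 \<and> P c j)" for c
  have uniq: "j = J c" if "j < 6" "P c j" for c j
  proof -
    have J: "J c < 6 \<and> P c (J c)" unfolding J_def by (rule someI[of _ j]) (use that in auto)
    from that(2) obtain f where f: "f < 6" "\<forall>i<6. \<sigma>!(6*c+i) = (B f i \<noteq> (i=j))" unfolding P_def by blast
    from J obtain g where g: "g < 6" "\<forall>i<6. \<sigma>!(6*c+i) = (B g i \<noteq> (i=J c))" unfolding P_def by blast
    show ?thesis using K3[of f g j "J c"] f g J that(1) by auto
  qed
  have sub: "Tg \<sigma> \<subseteq> (\<lambda>c. 6*c + J c + 1) ` {..<5}"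
    unfolding T using uniq by fastforce
  have "card (Tg \<sigma>) \<le> 5"
    using card_mono[OF _ sub] card_image_le[of "{..<5}" "\<lambda>c. 6*c + J c + 1"] by fastforce
  moreover have "Tg \<sigma> \<subseteq> {1..30}" unfolding T by auto
  ultimately show ?thesis by simp
qed


lemma hd_ne_last: "distinct xs \<Longrightarrow> 2 \<le> length xs \<Longrightarrow> hd xs \<noteq> last xs"
  by (cases xs) auto

context
  fixes \<pi> :: "nat list" and b :: bool
  assumes dist: "distinct \<pi>" and setp: "set \<pi> = {1..30}"
begin

definition Q :: "nat \<Rightarrow> nat list" where "Q c = filter (\<lambda>y. cls y = c) \<pi>"

lemma len30: "length \<pi> = 30"
  using distinct_card[OF dist] setp by simp

lemma range_elem: "x \<in> {1..30} \<Longrightarrow> cls x < 5 \<and> pz x < 6 \<and> x = 6 * cls x + pz x + 1"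
  unfolding cls_def pz_def by auto

lemma setQ: "c < 5 \<Longrightarrow> set (Q c) = (\<lambda>i. 6*c+i+1) ` {..<6}"
proof -
  assume c: "c < 5"
  show ?thesis
  proof
    show "set (Q c) \<subseteq> (\<lambda>i. 6*c+i+1) ` {..<6}"
    proof
      fix y assume "y \<in> set (Q c)"
      hence y: "y \<in> {1..30}" "cls y = c" unfolding Q_def using setp by auto
      from range_elem[OF y(1)] y(2) show "y \<in> (\<lambda>i. 6*c+i+1) ` {..<6}" by force
    qed
  next
    show "(\<lambda>i. 6*c+i+1) ` {..<6} \<subseteq> set (Q c)"
      unfolding Q_def using setp c by auto
  qed
qed

lemma lenQ: "c < 5 \<Longrightarrow> length (Q c) = 6"
proof -
  assume c: "c < 5"
  have "distinct (Q c)" unfolding Q_def using dist by simp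
  hence "length (Q c) = card (set (Q c))" by (simp add: distinct_card)
  also have "\<dots> = card {..<(6::nat)}" unfolding setQ[OF c] by (rule card_image) (auto simp: inj_on_def)
  finally show ?thesis by simp
qed

lemma entry:
  assumes x: "x \<in> {1..30}" and xz: "x \<noteq> last \<pi>"
  shows "final_array 30 Sg \<pi> b ! (x - 1) = (B (pz (hd (Q (cls x)))) (pz x) \<noteq> (x = last (Q (cls x))))"
proof -
  have xin: "x \<in> set \<pi>" using x setp by simp
  then obtain t where t: "t < 30" "\<pi> ! t = x" using len30 by (auto simp: in_set_conv_nth)
  have te: "the_elem {i. i < 30 \<and> \<pi> ! i = x} = t"
  proof -
    have "{i. i < 30 \<and> \<pi> ! i = x} = {t}"
      using t nth_eq_iff_index_eq[OF dist] len30 by auto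
    thus ?thesis by simp
  qed
  have fa: "final_array 30 Sg \<pi> b ! (x - 1) = Sg (take (Suc t) \<pi>)"
    using fa_nth[OF x] xz te by simp
  have tk: "take (Suc t) \<pi> = take t \<pi> @ [x]" using t len30 by (simp add: take_Suc_conv_app_nth)
  define P where "P = (\<lambda>y. cls y = cls x)"
  define A where "A = filter P (take t \<pi>) @ [x]"
  define D where "D = filter P (drop (Suc t) \<pi>)"
  have fA: "filter P (take (Suc t) \<pi>) = A" unfolding A_def tk P_def by simp
  have QAD: "Q (cls x) = A @ D"
  proof -
    have "Q (cls x) = filter P (take (Suc t) \<pi> @ drop (Suc t) \<pi>)" unfolding Q_def P_def by simp
    thus ?thesis unfolding filter_append fA D_def .
  qed
  have hdA: "hd A = hd (Q (cls x))" unfolding QAD by (simp add: A_def hd_append)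
  have dQ: "distinct (A @ D)" using dist unfolding QAD[symmetric] Q_def by simp
  have lQ: "length (A @ D) = 6" using lenQ[of "cls x"] range_elem[OF x] QAD by simp
  have eq: "(length A = 6) = (x = last (Q (cls x)))"
  proof (cases "D = []")
    case True
    then show ?thesis using lQ QAD by (simp add: A_def)
  next
    case False
    have "last (Q (cls x)) = last D" using False QAD by simp
    moreover have "last D \<in> set D" using False by simp
    moreover have "x \<in> set A" unfolding A_def by simp
    ultimately have "x \<noteq> last (Q (cls x))" using dQ by auto
    moreover have "length A \<noteq> 6" using lQ False by (cases D) auto
    ultimately show ?thesis by simp
  qed
  show ?thesis unfolding fa Sg_def
    using tk fA hdA eq by (simp add: P_def)
qed

lemma entry_last: "final_array 30 Sg \<pi> b ! (last \<pi> - 1) = b"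
proof -
  have "\<pi> \<noteq> []" using len30 by auto
  hence "last \<pi> \<in> {1..30}" using setp last_in_set by blast
  thus ?thesis using fa_nth by simp
qed

lemma last_in_T: "last \<pi> \<in> Tg (final_array 30 Sg \<pi> b)"
proof -
  define \<sigma> where "\<sigma> = final_array 30 Sg \<pi> b"
  define z where "z = last \<pi>"
  have ne: "\<pi> \<noteq> []" using len30 by auto
  have zin: "z \<in> {1..30}" using setp last_in_set[OF ne] unfolding z_def by blast
  define c0 where "c0 = cls z"
  have c0: "c0 < 5" "pz z < 6" "z = 6*c0 + pz z + 1" using range_elem[OF zin] unfolding c0_def by auto
  define f0 where "f0 = pz (hd (Q c0))"
  have lastQ: "last (Q c0) = z"
  proof -
    have e: "butlast \<pi> @ [z] = \<pi>" using ne unfolding z_def by simp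
    have "Q c0 = filter (\<lambda>y. cls y = c0) (butlast \<pi> @ [z])" unfolding Q_def e ..
    also have "\<dots> = filter (\<lambda>y. cls y = c0) (butlast \<pi>) @ [z]" by (simp add: c0_def)
    finally show ?thesis by simp
  qed
  have lq: "length (Q c0) = 6" using lenQ c0 by simp
  have hdz: "hd (Q c0) \<noteq> z"
  proof -
    have "distinct (Q c0)" unfolding Q_def using dist by simp
    thus ?thesis using hd_ne_last[of "Q c0"] lq lastQ by simp
  qed
  have hdin: "hd (Q c0) \<in> set (Q c0)" using lq by (cases "Q c0") auto
  then obtain i0 where i0: "i0 < 6" "hd (Q c0) = 6*c0+i0+1" using setQ[OF c0(1)] by auto
  have f0: "f0 < 6" "f0 \<noteq> pz z" using i0 hdz c0 unfolding f0_def by auto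
  have sig: "\<sigma> ! (6*c+i) = (if 6*c+i+1 = z then b else
      (B (pz (hd (Q c))) i \<noteq> (6*c+i+1 = last (Q c))))" if "c < 5" "i < 6" for c i
  proof -
    have x: "6*c+i+1 \<in> {1..30}" using that by auto
    show ?thesis
    proof (cases "6*c+i+1 = z")
      case True
      hence e: "6*c+i = z - 1" by simp
      have "\<sigma> ! (z - 1) = b" using entry_last unfolding \<sigma>_def z_def by simp
      then show ?thesis using True e by simp
    next
      case False
      then show ?thesis using entry[OF x] that unfolding \<sigma>_def z_def by simp
    qed
  qed
  have other: "\<exists>f<6. \<exists>j<6. \<forall>i<6. \<sigma>!(6*c+i) = (B f i \<noteq> (i = j))" if c5: "c < 5" and cc: "c \<noteq> c0" for c
  proof -
    have "last (Q c) \<in> set (Q c)" using lenQ[OF c5] by (cases "Q c" rule: rev_cases) auto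
    then obtain j where j: "j < 6" "last (Q c) = 6*c+j+1" using setQ[OF c5] by auto
    have "hd (Q c) \<in> set (Q c)" using lenQ[OF c5] by (cases "Q c") auto
    then obtain f where f: "f < 6" "hd (Q c) = 6*c+f+1" using setQ[OF c5] by auto
    have "\<forall>i<6. \<sigma>!(6*c+i) = (B f i \<noteq> (i = j))"
    proof (intro allI impI)
      fix i :: nat assume i: "i < 6"
      have "cls (6*c+i+1) = c" using i by simp
      hence "6*c+i+1 \<noteq> z" using cc unfolding c0_def by auto
      thus "\<sigma>!(6*c+i) = (B f i \<noteq> (i = j))" using sig[OF c5 i] f j by simp
    qed
    thus ?thesis using f(1) j(1) by blast
  qed
  have pat0: "\<sigma>!(6*c0+i) = (if i = pz z then b else B f0 i)" if "i < 6" for i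
  proof (cases "i = pz z")
    case True
    then show ?thesis using sig[OF c0(1) that] c0 by simp
  next
    case False
    have "6*c0+i+1 \<noteq> z" using c0(3) False by auto
    then show ?thesis using sig[OF c0(1) that] False lastQ unfolding f0_def by simp
  qed
  show ?thesis
  proof (cases "b = B f0 (pz z)")
    case True
    have cw0: "\<forall>i<6. \<sigma>!(6*c0+i) = B f0 i" using pat0 True by auto
    hence cond: "\<exists>c<5. \<exists>f<6. \<forall>i<6. \<sigma>!(6*c+i) = B f i" using c0(1) f0(1) by blast
    define cf where "cf = (SOME cf. fst cf < 5 \<and> snd cf < 6 \<and> (\<forall>i<6. \<sigma>!(6*fst cf+i) = B (snd cf) i))"
    have cfp: "fst cf < 5 \<and> snd cf < 6 \<and> (\<forall>i<6. \<sigma>!(6*fst cf+i) = B (snd cf) i)"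
      unfolding cf_def by (rule someI[of _ "(c0,f0)"]) (use cw0 c0 f0 in auto)
    have fc: "fst cf = c0"
    proof (rule ccontr)
      assume "fst cf \<noteq> c0"
      then obtain f j where fj: "f < 6" "j < 6" "\<forall>i<6. \<sigma>!(6*fst cf+i) = (B f i \<noteq> (i = j))"
        using other[of "fst cf"] cfp by blast
      have "\<forall>i<6. B (snd cf) i = (B f i \<noteq> (i = j))" using fj(3) cfp by auto
      thus False using K2[of f "snd cf" j] fj cfp by blast
    qed
    have sc: "snd cf = f0" using K1[of "snd cf" f0] cfp cw0 fc f0 by auto
    have T: "Tg \<sigma> = (\<lambda>i. 6*fst cf+i+1) ` {i. i<6 \<and> i \<noteq> snd cf}"
      unfolding Tg_def cf_def using cond by (simp add: Let_def)
    show ?thesis unfolding T \<sigma>_def[symmetric] z_def[symmetric] fc sc using c0 f0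
      by (intro image_eqI[of _ _ "pz z"]) auto
  next
    case False
    have near0: "\<forall>i<6. \<sigma>!(6*c0+i) = (B f0 i \<noteq> (i = pz z))" using pat0 False by auto
    have ncond: "\<not> (\<exists>c<5. \<exists>f<6. \<forall>i<6. \<sigma>!(6*c+i) = B f i)"
    proof
      assume "\<exists>c<5. \<exists>f<6. \<forall>i<6. \<sigma>!(6*c+i) = B f i"
      then obtain c g where cg: "c < 5" "g < 6" "\<forall>i<6. \<sigma>!(6*c+i) = B g i" by blast
      show False
      proof (cases "c = c0")
        case True
        have "\<forall>i<6. B g i = (B f0 i \<noteq> (i = pz z))" using cg(3) near0 True by auto
        thus False using K2[of f0 g "pz z"] f0 cg c0 by blast
      next
        case False
        then obtain f j where fj: "f < 6" "j < 6" "\<forall>i<6. \<sigma>!(6*c+i) = (B f i \<noteq> (i = j))"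
          using other[of c] cg by blast
        have "\<forall>i<6. B g i = (B f i \<noteq> (i = j))" using fj(3) cg by auto
        thus False using K2[of f g j] fj cg by blast
      qed
    qed
    have T: "Tg \<sigma> = {x. \<exists>c<5. \<exists>j<6. x = 6*c+j+1 \<and> (\<exists>f<6. \<forall>i<6. \<sigma>!(6*c+i) = (B f i \<noteq> (i=j)))}"
      unfolding Tg_def by (simp only: if_not_P[OF ncond])
    show ?thesis unfolding T \<sigma>_def[symmetric] z_def[symmetric] using c0 f0 near0 by blast
  qed
qed

end

theorem lemma2:
  shows "\<exists>S T. is_strategy 5 30 S T"
proof (intro exI)
  show "is_strategy 5 30 Sg Tg"
    unfolding is_strategy_def using Tg_card last_in_T by blast
qed

end
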